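(* Let $0<x_1<x_2<x_3$ and $y_3>0$ with $y_3<1/x_2$, $x_3y_3<1$ and $x_1x_2\ge 1/\sqrt2$. Put $q_2=(x_2,1/x_2)$, $q_3=(x_3,y_3)$, $u:=(x_3-x_2)\,y_3$, and suppose $$1+\frac{x_2-x_1}{x_2}+u\ \ge\ 2.$$ Then $0<u<1$, and $x':=\dfrac{x_2}{1-u}$ satisfies $x'>x_2$, $\dfrac{x'-x_2}{x'}=u$, and $$T_h(x_2,x')\ \le\ T(q_2,q_3).$$
   Context: For points $p=(x_p,y_p)$ and $q=(x_q,y_q)$ in $(0,\infty)^2$ define $T(p,q):=\tfrac12\,(y_p-y_q+x_q-x_p)\,(x_p+y_q)$, and for $a,b>0$ define $T_h(a,b):=T((a,1/a),(b,1/b))=\tfrac12\bigl(\tfrac1a-\tfrac1b+b-a\bigr)\bigl(a+\tfrac1b\bigr)$. (In the paper: a normalized tile consisting of a step $(q_1,q_2)$ between hyperbola points, $q_1=(x_1,1/x_1)$, and a "corner" $(q_2,q_3)$ with $q_3$ strictly below the hyperbola $xy=1$, of area at least $2$, can be replaced by a tile with two steps of the same area and no larger crown.) *)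

theory Defs
  imports Complex_Main
begin

definition T :: "real \<times> real \<Rightarrow> real \<times> real \<Rightarrow> real" where
  "T p q = (1/2) * (snd p - snd q + fst q - fst p) * (fst p + snd q)"

definition T_h :: "real \<Rightarrow> real \<Rightarrow> real" where
  "T_h a b = T (a, 1/a) (b, 1/b)"

end

theory Submission
  imports Defs
begin

lemma ident:
  fixes a t w :: real
  assumes "a > 0" "t > 0" "w > 0"
  shows "T (a, 1 / a) (a + (1-w) / (t/a), t/a) - T_h a (a / w) = (w - t) / 2 * (1 + (t + w - 1) / a^2 + (1-w) * a^2 / (t * w))"
  using assms unfolding T_h_def T_def
  by (simp add: field_simps power2_eq_square)

theorem mainTheorem7:
  fixes x1 x2 x3 y3 :: real
  assumes "0 < x1" "x1 < x2" "x2 < x3"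
    and "y3 > 0" "y3 < 1 / x2" "x3 * y3 < 1"
    and "x1 * x2 \<ge> 1 / sqrt 2"
    and "1 + (x2 - x1) / x2 + (x3 - x2) * y3 \<ge> 2"
  shows "0 < (x3 - x2) * y3 \<and> (x3 - x2) * y3 < 1 \<and>
         (let u = (x3 - x2) * y3; x' = x2 / (1 - u) in
            x' > x2 \<and> (x' - x2) / x' = u \<and>
            T_h x2 x' \<le> T (x2, 1 / x2) (x3, y3))"
proof -
  define a where "a = x2"
  define u where "u = (x3 - x2) * y3"
  define t where "t = a * y3"
  define w where "w = 1 - u"
  define A where "A = a^2"
  have a0: "a > 0" using assms a_def by simp
  have u0: "u > 0" using assms u_def by simp
  have xy: "x2 * y3 > 0" using assms by simp
  have u1: "u < 1" using assms(6) xy u_def by (simp add: algebra_simps)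
  have t0: "t > 0" using a0 assms t_def by simp
  have tw: "t < w" using assms unfolding t_def w_def u_def a_def by (simp add: algebra_simps)
  have w0: "w > 0" using u1 w_def by simp
  have ux: "u \<ge> x1 / a" using assms(8) a0 unfolding u_def a_def by (simp add: field_simps)
  define p where "p = u * A"
  have pge: "p \<ge> x1 * a" using ux a0 unfolding p_def A_def by (simp add: field_simps power2_eq_square)
  have s2: "sqrt 2 > 0" by simp
  have "x1 * x2 * sqrt 2 \<ge> 1" using assms(7) s2 by (simp add: field_simps)
  moreover have "x1 * x2 * sqrt 2 \<le> p * sqrt 2" using pge s2 a_def by simp
  ultimately have "p * sqrt 2 \<ge> 1" by linarith
  hence "(p * sqrt 2)^2 \<ge> 1" by (simp add: one_le_power)
  hence p2: "2 * p^2 \<ge> 1" by (simp add: power_mult_distrib)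
  have p0: "p > 0" using u0 a0 p_def A_def by simp
  have pp: "p + p^2 > 1"
  proof (rule ccontr)
    assume "\<not> ?thesis"
    hence ph: "p \<le> 1/2" using p2 by linarith
    have "p * p \<le> (1/2) * (1/2)" using mult_mono[OF ph ph] p0 by simp
    thus False using p2 by (simp add: power2_eq_square)
  qed
  have A0: "A > 0" using a0 A_def by simp
  have uA: "u / A < 1 + p"
  proof -
    have "u / A = u^2 / p" using A0 u0 p_def by (simp add: field_simps power2_eq_square)
    also have "... < 1 / p" using u0 u1 p0 by (simp add: divide_strict_right_mono power_less_one_iff)
    also have "... < 1 + p" using pp p0 by (simp add: field_simps power2_eq_square)
    finally show ?thesis .
  qed
  have twl: "t * w \<le> 1" using t0 tw w0 u0 w_def by (smt (verit) mult_strict_mono mult_le_one)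
  have "p * (t * w) \<le> p" using p0 twl mult_left_le[of "t*w" p] by simp
  hence "u * A / (t * w) \<ge> p" using t0 w0 p_def by (simp add: field_simps)
  hence h: "1 + (t + w - 1) / A + u * A / (t * w) > 0"
    using uA A0 t0 w_def by (smt (verit) divide_right_mono diff_divide_distrib)
  have xp: "x2 / (1 - u) = a / w" using a_def w_def by simp
  have key: "T (x2, 1 / x2) (x3, y3) - T_h x2 (a / w) = (w - t) / 2 * (1 + (t + w - 1) / A + u * A / (t * w))"
  proof -
    have x3e: "x3 = a + u / y3" using assms u_def a_def by (simp add: field_simps)
    have y3e: "y3 = t / a" using a0 t_def by simp
    have x2e: "x2 = a" using a_def by simp
    have ue: "u = 1 - w" using w_def by simp
    show ?thesis using ident[OF a0 t0 w0] unfolding x3e y3e x2e A_def ue .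
  qed
  have main: "T_h x2 (a / w) \<le> T (x2, 1 / x2) (x3, y3)"
  proof -
    have "(w - t) / 2 * (1 + (t + w - 1) / A + u * A / (t * w)) \<ge> 0"
      using tw h by (intro mult_nonneg_nonneg) auto
    thus ?thesis using key by linarith
  qed
  have "a / w > a" using a0 w0 u0 w_def by (simp add: field_simps)
  moreover have "(a / w - a) / (a / w) = u"
  proof -
    have "u = 1 - w" using w_def by simp
    have "(a / w - a) / (a / w) = 1 - w" using a0 w0 by (simp add: field_simps)
    thus ?thesis using \<open>u = 1 - w\<close> by simp
  qed
  ultimately have fin: "a / w > a \<and> (a / w - a) / (a / w) = u \<and> T_h x2 (a / w) \<le> T (x2, 1 / x2) (x3, y3)"
    using main by blast
  show ?thesis unfolding Let_def u_def[symmetric] xp using fin u0 u1 unfolding a_def by blast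
qed

end
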